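(* Let $C$ be a strictly convex cone in a topological real vector space $V$ such that the interior of $C$ in $V$ is non-empty and $C\neq V$. Then $V$ is one-dimensional and $C\cup\{0\}$ is a ray, i.e. $C\cup\{0\}=\{tx: t\ge 0\}$ for some non-zero $x\in V$.
   Context: Topological real vector spaces are not assumed Hausdorff. A cone is a subset $C$ with $\lambda C\subseteq C$ for all $\lambda>0$ (it may or may not contain $0$). For a subset $S$, $\mathrm{Aff}(S)$ is its affine hull; $\mathrm{ri}(S)$, $\mathrm{rc}(S)$ are the interior and closure of $S$ in the subspace topology of $\mathrm{Aff}(S)$. $]x,y[=\{(1-t)x+ty: t\in[0,1]\}\setminus\{x,y\}$. A set $C$ is strictly convex if for any two distinct $x,y\in\mathrm{rc}(C)$, $]x,y[\subseteq\mathrm{ri}(C)$. *)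

theory Defs
  imports "HOL-Analysis.Analysis"
begin

definition topological_real_vector_space :: "'a::{real_vector,topological_space} itself \<Rightarrow> bool" where
  "topological_real_vector_space _ \<longleftrightarrow>
     continuous_on UNIV (\<lambda>p::'a \<times> 'a. fst p + snd p) \<and>
     continuous_on UNIV (\<lambda>p::real \<times> 'a. fst p *\<^sub>R snd p)"

text \<open>A cone: closed under multiplication by positive scalars (need not contain 0).\<close>
definition pos_cone :: "'a::real_vector set \<Rightarrow> bool" where
  "pos_cone C \<longleftrightarrow> (\<forall>x\<in>C. \<forall>l::real. l > 0 \<longrightarrow> l *\<^sub>R x \<in> C)"

definition rel_closure :: "'a::{real_vector,topological_space} set \<Rightarrow> 'a set" where
  "rel_closure S = (top_of_set (affine hull S)) closure_of S"

definition strictly_convex_set :: "'a::{real_vector,topological_space} set \<Rightarrow> bool" where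
  "strictly_convex_set C \<longleftrightarrow>
     (\<forall>x\<in>rel_closure C. \<forall>y\<in>rel_closure C. x \<noteq> y \<longrightarrow> open_segment x y \<subseteq> rel_interior C)"

end

theory Submission
  imports Defs
begin

context
  fixes C :: "'a::{real_vector,topological_space} set"
  assumes tvs: "topological_real_vector_space TYPE('a)"
    and cone: "pos_cone C"
    and sc: "strictly_convex_set C"
    and ne: "interior C \<noteq> {}"
    and nU: "C \<noteq> UNIV"
begin

lemma add_cont: "continuous_on UNIV (\<lambda>p::'a \<times> 'a. fst p + snd p)"
  and smul_cont: "continuous_on UNIV (\<lambda>p::real \<times> 'a. fst p *\<^sub>R snd p)"
  using tvs unfolding topological_real_vector_space_def by auto

lemma cont_add:
  assumes "continuous_on S f" "continuous_on S g"
  shows "continuous_on S (\<lambda>t. f t + g t :: 'a)"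
proof -
  have "continuous_on S ((\<lambda>p::'a \<times> 'a. fst p + snd p) \<circ> (\<lambda>t. (f t, g t)))"
    by (rule continuous_on_compose) (auto intro: continuous_on_Pair assms continuous_on_subset[OF add_cont])
  then show ?thesis by (simp add: o_def)
qed

lemma cont_smul:
  fixes f :: "'b::topological_space \<Rightarrow> real"
  assumes "continuous_on S f" "continuous_on S g"
  shows "continuous_on S (\<lambda>t. f t *\<^sub>R g t :: 'a)"
proof -
  have "continuous_on S ((\<lambda>p::real \<times> 'a. fst p *\<^sub>R snd p) \<circ> (\<lambda>t. (f t, g t)))"
    by (rule continuous_on_compose) (auto intro: continuous_on_Pair assms continuous_on_subset[OF smul_cont])
  then show ?thesis by (simp add: o_def)
qed

lemma line_open:
  fixes x v :: 'a
  assumes "open U" "x \<in> U"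
  shows "\<exists>e>0. x + e *\<^sub>R v \<in> U"
proof -
  have c: "continuous_on UNIV (\<lambda>t::real. x + t *\<^sub>R v)"
    by (rule cont_add[OF continuous_on_const cont_smul[OF continuous_on_id continuous_on_const]])
  have "open ((\<lambda>t::real. x + t *\<^sub>R v) -` U)"
    using continuous_on_open_vimage[OF open_UNIV] c assms(1) by auto
  moreover have "0 \<in> (\<lambda>t::real. x + t *\<^sub>R v) -` U" using assms by simp
  ultimately obtain e where "e > 0" and "ball 0 e \<subseteq> (\<lambda>t::real. x + t *\<^sub>R v) -` U"
    using open_contains_ball by blast
  moreover have "e/2 \<in> ball 0 e" using \<open>e > 0\<close> by (simp add: dist_real_def)
  ultimately have "x + (e/2) *\<^sub>R v \<in> U" by blast
  then show ?thesis using \<open>e > 0\<close> by (intro exI[of _ "e/2"]) auto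
qed

lemma aff_UNIV: "affine hull C = UNIV"
proof -
  obtain x where x: "x \<in> interior C" using ne by auto
  have xC: "x \<in> C" using x interior_subset by auto
  have "z \<in> affine hull C" for z
  proof -
    obtain e where e: "e > 0" "x + e *\<^sub>R (z - x) \<in> interior C"
      using line_open[OF open_interior x] by blast
    have "x + e *\<^sub>R (z - x) \<in> C"
      using e(2) interior_subset by blast
    then have h1: "x + e *\<^sub>R (z - x) \<in> affine hull C" by (rule hull_inc)
    have h2: "x \<in> affine hull C" using xC by (rule hull_inc)
    have "(1 - 1/e) *\<^sub>R x + (1/e) *\<^sub>R (x + e *\<^sub>R (z - x)) \<in> affine hull C"
      by (rule mem_affine[OF affine_affine_hull h2 h1]) simp
    moreover have "(1/e) *\<^sub>R (x + e *\<^sub>R (z - x)) = (1/e) *\<^sub>R x + (z - x)"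
      using e(1) by (simp add: scaleR_right_distrib)
    moreover have "(1 - 1/e) *\<^sub>R x + ((1/e) *\<^sub>R x + (z - x)) = z"
      by (simp add: scaleR_diff_left)
    ultimately show ?thesis by simp
  qed
  then show ?thesis by auto
qed

lemma ri_eq: "rel_interior C = interior C"
  using aff_UNIV unfolding rel_interior interior_def by auto

lemma rc_eq: "rel_closure C = closure C"
  using aff_UNIV unfolding rel_closure_def by simp

lemma sc': "x \<in> closure C \<Longrightarrow> y \<in> closure C \<Longrightarrow> x \<noteq> y \<Longrightarrow> open_segment x y \<subseteq> interior C"
  using sc unfolding strictly_convex_set_def rc_eq ri_eq by blast

lemma closure_cone:
  assumes "y \<in> closure C" "l > 0"
  shows "l *\<^sub>R y \<in> closure C"
proof -
  have "(\<lambda>y. l *\<^sub>R y) ` closure C \<subseteq> closure C"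
  proof (rule image_closure_subset)
    show "continuous_on (closure C) (\<lambda>y. l *\<^sub>R y)"
      by (intro cont_smul continuous_on_const continuous_on_id)
    show "(\<lambda>y. l *\<^sub>R y) ` C \<subseteq> closure C"
      using cone assms(2) closure_subset unfolding pos_cone_def by blast
  qed auto
  then show ?thesis using assms by auto
qed

lemma K:
  assumes "y \<in> closure C" "y \<noteq> 0"
  shows "y \<in> interior C"
proof -
  have ne2: "(1/2) *\<^sub>R y \<noteq> 2 *\<^sub>R y"
  proof
    assume "(1/2) *\<^sub>R y = 2 *\<^sub>R y"
    then have "((1/2) - 2) *\<^sub>R y = 0" by (simp add: scaleR_diff_left)
    then show False using assms(2) by simp
  qed
  have "(1 - 1/3) *\<^sub>R ((1/2) *\<^sub>R y) + (1/3) *\<^sub>R (2 *\<^sub>R y) = ((1-1/3)*(1/2) + (1/3)*2) *\<^sub>R y"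
    by (simp only: scaleR_scaleR scaleR_add_left)
  also have "\<dots> = y" by simp
  finally have eq: "y = (1 - 1/3) *\<^sub>R ((1/2) *\<^sub>R y) + (1/3) *\<^sub>R (2 *\<^sub>R y)" by simp
  have mem: "y \<in> open_segment ((1/2) *\<^sub>R y) (2 *\<^sub>R y)"
    unfolding in_segment(2) using ne2 eq by (intro conjI exI[of _ "1/3"]) auto
  have c1: "(1/2) *\<^sub>R y \<in> closure C" by (rule closure_cone[OF assms(1)]) simp
  have c2: "2 *\<^sub>R y \<in> closure C" by (rule closure_cone[OF assms(1)]) simp
  show ?thesis using sc'[OF c1 c2 ne2] mem by blast
qed

lemma Z: "0 \<notin> interior C"
proof
  assume 0: "0 \<in> interior C"
  have "v \<in> C" for v
  proof -
    obtain e where e: "e > 0" "0 + e *\<^sub>R v \<in> interior C" using line_open[OF open_interior 0] by blast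
    then have "e *\<^sub>R v \<in> C" using interior_subset by auto
    moreover have "1/e > 0" using e(1) by simp
    ultimately have "(1/e) *\<^sub>R (e *\<^sub>R v) \<in> C" using cone unfolding pos_cone_def by blast
    then show ?thesis using e by simp
  qed
  then show False using nU by auto
qed

lemma opp:
  assumes "x \<in> interior C"
  shows "- x \<notin> closure C"
proof
  assume a: "- x \<in> closure C"
  have x0: "x \<noteq> 0" using assms Z by auto
  have "x \<in> closure C" using assms interior_subset closure_subset by auto
  moreover have "x \<noteq> - x"
  proof
    assume "x = - x"
    then have "x + x = 0" by (metis add.right_inverse)
    then have "(2::real) *\<^sub>R x = 0" by (simp add: scaleR_2)
    then show False using x0 by simp
  qed
  moreover have "0 \<in> open_segment x (- x)"
    unfolding in_segment using calculation(2)
    by (intro conjI exI[of _ "1/2"]) (auto simp: algebra_simps)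
  ultimately show False using sc' a Z by blast
qed

lemma seg_cont: "continuous_on {0..1} (\<lambda>u::real. (1 - u) *\<^sub>R a + u *\<^sub>R b :: 'a)"
  by (intro cont_add cont_smul continuous_on_const continuous_on_id continuous_intros)

lemma S:
  assumes "a \<in> interior C" "0 \<notin> closed_segment a b"
  shows "b \<in> interior C"
proof (rule ccontr)
  assume nb: "b \<notin> interior C"
  have b0: "b \<noteq> 0" using assms(2) by auto
  have "b \<notin> closure C" using K b0 nb by auto
  then have bC: "b \<notin> C" using closure_subset by auto
  have seg: "closed_segment a b = (\<lambda>u::real. (1 - u) *\<^sub>R a + u *\<^sub>R b) ` {0..1}"
    unfolding closed_segment_def by auto
  have "connected (closed_segment a b)"
    unfolding seg by (rule connected_continuous_image[OF seg_cont connected_Icc])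
  moreover have "closed_segment a b \<inter> C \<noteq> {}"
    using assms(1) interior_subset by auto
  moreover have "closed_segment a b - C \<noteq> {}" using bC by auto
  ultimately obtain z where z: "z \<in> closed_segment a b" "z \<in> frontier C"
    using connected_Int_frontier by blast
  then have "z \<noteq> 0" using assms(2) by auto
  moreover have "z \<in> closure C" "z \<notin> interior C" using z(2) unfolding frontier_def by auto
  ultimately show False using K[OF \<open>z \<in> closure C\<close> \<open>z \<noteq> 0\<close>] \<open>z \<notin> interior C\<close> by simp
qed

end

theorem mainTheorem12:
  fixes C :: "'a::{real_vector,topological_space} set"
  assumes "topological_real_vector_space TYPE('a)"
    and "pos_cone C"
    and "strictly_convex_set C"
    and "interior C \<noteq> {}"
    and "C \<noteq> UNIV"
  shows "dim (UNIV :: 'a set) = 1 \<and>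
         (\<exists>x::'a. x \<noteq> 0 \<and> C \<union> {0} = {t *\<^sub>R x | t::real. t \<ge> 0})"
proof -
  note L = K[OF assms] Z[OF assms] opp[OF assms] S[OF assms]
  obtain x where x: "x \<in> interior C" using assms(4) by auto
  have x0: "x \<noteq> 0" using x L(2) by auto
  have xC: "x \<in> C" using x interior_subset by auto
  have nx: "- x \<notin> closure C" using L(3) x by auto
  have span: "y \<in> span {x}" for y
  proof (rule ccontr)
    assume ny: "y \<notin> span {x}"
    have "0 \<notin> closed_segment x y"
    proof
      assume "0 \<in> closed_segment x y"
      then obtain u where u: "0 \<le> u" "u \<le> 1" "(1 - u) *\<^sub>R x + u *\<^sub>R y = 0"
        unfolding closed_segment_def by auto
      show False
      proof (cases "u = 0")
        case True then show ?thesis using u x0 by simp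
      next
        case False
        have uy: "u *\<^sub>R y = - ((1-u) *\<^sub>R x)" using u(3) by (metis add.commute eq_neg_iff_add_eq_0)
        have "y = (1/u) *\<^sub>R (u *\<^sub>R y)" using False by simp
        also have "\<dots> = (1/u) *\<^sub>R (- ((1-u) *\<^sub>R x))" using uy by simp
        finally have "y \<in> span {x}" by (metis span_scale span_neg span_base singletonI)
        then show False using ny by simp
      qed
    qed
    then have yi: "y \<in> interior C" using L(4) x by blast
    have "0 \<notin> closed_segment y (- x)"
    proof
      assume "0 \<in> closed_segment y (- x)"
      then obtain u where u: "0 \<le> u" "u \<le> 1" "(1 - u) *\<^sub>R y + u *\<^sub>R (- x) = 0"
        unfolding closed_segment_def by auto
      show False
      proof (cases "u = 1")
        case True then show ?thesis using u x0 by simp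
      next
        case False
        then have "(1 - u) *\<^sub>R y = u *\<^sub>R x" using u(3) by (simp add: eq_neg_iff_add_eq_0 scaleR_minus_right)
        have "y = (1/(1-u)) *\<^sub>R ((1-u) *\<^sub>R y)" using False by simp
        also have "\<dots> = (1/(1-u)) *\<^sub>R (u *\<^sub>R x)" using \<open>(1 - u) *\<^sub>R y = u *\<^sub>R x\<close> by simp
        finally have "y \<in> span {x}" by (metis span_scale span_base singletonI)
        then show False using ny by simp
      qed
    qed
    then have "- x \<in> interior C" using L(4) yi by blast
    then show False using nx interior_subset closure_subset by auto
  qed
  have "UNIV = span {x}" using span by auto
  then have "dim (UNIV :: 'a set) = dim {x}" by (metis dim_span)
  also have "\<dots> = 1" using x0 by (simp add: dim_eq_card_independent)
  finally have d: "dim (UNIV :: 'a set) = 1" .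
  have ray: "C \<union> {0} = {t *\<^sub>R x | t::real. t \<ge> 0}"
  proof (intro equalityI subsetI)
    fix c assume c: "c \<in> C \<union> {0}"
    obtain s where s: "c = s *\<^sub>R x" using span[of c] by (auto simp: span_singleton)
    show "c \<in> {t *\<^sub>R x | t::real. t \<ge> 0}"
    proof (cases "s < 0")
      case True
      then have "c \<in> C" using c x0 s by auto
      moreover have "- 1 / s > 0" using True by (simp add: field_simps)
      ultimately have "(- 1 / s) *\<^sub>R c \<in> C" using assms(2) unfolding pos_cone_def by blast
      moreover have "(- 1 / s) *\<^sub>R c = - x" using s True by simp
      ultimately have "- x \<in> C" by simp
      then show ?thesis using nx closure_subset by auto
    next
      case False then show ?thesis using s by auto
    qed
  next
    fix c assume "c \<in> {t *\<^sub>R x | t::real. t \<ge> 0}"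
    then obtain t where t: "t \<ge> 0" "c = t *\<^sub>R x" by auto
    show "c \<in> C \<union> {0}"
      using t xC assms(2) unfolding pos_cone_def by (cases "t = 0") auto
  qed
  show ?thesis using d x0 ray by blast
qed

end
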